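(* For any $f,g\in L^\infty(\rho_X)$, \[|\mathcal R(\operatorname{sign} f)-\mathcal R(\operatorname{sign} g)|\le\mathbb P_{X\sim\rho_X}\big(\|f-g\|_{L^\infty(\rho_X)}\ge|f(X)|\big).\]
   Context: $\mathcal X=[0,1]^d$, $\rho$ is a probability distribution on $\mathcal X\times\{-1,1\}$ with $X$-marginal $\rho_X$, $(X,Y)\sim\rho$. $\operatorname{sign}(t)=1$ for $t>0$, $-1$ for $t<0$, $0$ for $t=0$, and $\operatorname{sign} f=\operatorname{sign}\circ f$. For a measurable $c$ on $\mathcal X$, $\mathcal R(c)=\mathbb P(c(X)\ne Y)$. *)

theory Defs
  imports "HOL-Probability.Probability"
begin

definition cube :: "(real ^ 'd) set" where
  "cube = {x. \<forall>i. 0 \<le> x $ i \<and> x $ i \<le> 1}"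

definition data_dist :: "((real ^ 'd) \<times> real) measure \<Rightarrow> bool" where
  "data_dist rho \<longleftrightarrow> prob_space rho \<and> sets rho = sets borel \<and>
     emeasure rho (space rho - cube \<times> {-1, 1}) = 0"

definition marginal :: "((real ^ 'd) \<times> real) measure \<Rightarrow> (real ^ 'd) measure" where
  "marginal rho = distr rho borel fst"

definition Linf_norm :: "'a measure \<Rightarrow> ('a \<Rightarrow> real) \<Rightarrow> ereal" where
  "Linf_norm M f = esssup M (\<lambda>x. ereal \<bar>f x\<bar>)"

definition in_Linf :: "'a measure \<Rightarrow> ('a \<Rightarrow> real) \<Rightarrow> bool" where
  "in_Linf M f \<longleftrightarrow> f \<in> borel_measurable M \<and> Linf_norm M f < \<infinity>"

definition sign_fun :: "('a \<Rightarrow> real) \<Rightarrow> 'a \<Rightarrow> real" where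
  "sign_fun f = (\<lambda>x. sgn (f x))"

definition risk :: "((real ^ 'd) \<times> real) measure \<Rightarrow> ((real ^ 'd) \<Rightarrow> real) \<Rightarrow> real" where
  "risk rho c = measure rho {p \<in> space rho. c (fst p) \<noteq> snd p}"

end

theory Submission
  imports Defs
begin

theorem lemma6:
  fixes rho :: "((real ^ 'd) \<times> real) measure"
    and f g :: "real ^ 'd \<Rightarrow> real"
  assumes "data_dist rho"
    and "in_Linf (marginal rho) f"
    and "in_Linf (marginal rho) g"
  shows "\<bar>risk rho (sign_fun f) - risk rho (sign_fun g)\<bar>
    \<le> measure (marginal rho)
        {x \<in> space (marginal rho). Linf_norm (marginal rho) (\<lambda>z. f z - g z) \<ge> ereal \<bar>f x\<bar>}"
proof -
  define M where "M = marginal rho"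
  define N where "N = Linf_norm M (\<lambda>z. f z - g z)"
  have ps: "prob_space rho" and sr: "sets rho = sets borel"
    using assms(1) unfolding data_dist_def by auto
  interpret prob_space rho by (fact ps)
  have fstm: "fst \<in> measurable rho borel"
    unfolding measurable_cong_sets[OF sr refl] by (intro borel_measurable_continuous_onI continuous_intros)
  have M_def': "M = distr rho borel fst" unfolding M_def marginal_def ..
  have sM: "sets M = sets borel" unfolding M_def' by simp
  have spM: "space M = UNIV" unfolding M_def' by simp
  have fb: "f \<in> borel_measurable borel" and gb: "g \<in> borel_measurable borel"
    using assms(2,3) measurable_cong_sets[OF sM refl] unfolding in_Linf_def M_def by auto
  define S where "S = {x \<in> space M. N \<ge> ereal \<bar>f x\<bar>}"
  have Sb: "S \<in> sets borel" unfolding S_def spM using fb by measurable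
  have AE1: "AE x in M. ereal \<bar>f x - g x\<bar> \<le> N"
    unfolding N_def Linf_norm_def by (rule esssup_AE)
  have AE2: "AE p in rho. ereal \<bar>f (fst p) - g (fst p)\<bar> \<le> N"
  proof -
    have "{x \<in> space borel. ereal \<bar>f x - g x\<bar> \<le> N} \<in> sets borel" using fb gb by measurable
    then show ?thesis using AE1 unfolding M_def' by (simp add: AE_distr_iff[OF fstm])
  qed
  define C where "C = {p \<in> space rho. N \<ge> ereal \<bar>f (fst p)\<bar>}"
  have Cm: "C = fst -` S \<inter> space rho" unfolding C_def S_def spM by auto
  have Csets: "C \<in> sets rho" unfolding Cm using fstm Sb by (simp add: measurable_sets)
  have mS: "measure M S = measure rho C"
    unfolding M_def' Cm by (rule measure_distr[OF fstm Sb])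
  define A where "A = {p \<in> space rho. sign_fun f (fst p) \<noteq> snd p}"
  define B where "B = {p \<in> space rho. sign_fun g (fst p) \<noteq> snd p}"
  have sndm: "snd \<in> measurable rho borel"
    unfolding measurable_cong_sets[OF sr refl] by (intro borel_measurable_continuous_onI continuous_intros)
  have Asets: "A \<in> sets rho" unfolding A_def sign_fun_def
    using fb fstm sndm by measurable
  have Bsets: "B \<in> sets rho" unfolding B_def sign_fun_def
    using gb fstm sndm by measurable
  have key: "sgn (f x) = sgn (g x)" if "ereal \<bar>f x - g x\<bar> \<le> N" "\<not> N \<ge> ereal \<bar>f x\<bar>" for x
  proof -
    have "ereal \<bar>f x - g x\<bar> < ereal \<bar>f x\<bar>" using that(1) that(2)[unfolded not_le] by (rule le_less_trans)
    then have "\<bar>f x - g x\<bar> < \<bar>f x\<bar>" by simp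
    then show ?thesis by (auto simp: sgn_if split: if_splits)
  qed
  have "AE p in rho. p \<in> A \<longrightarrow> p \<in> B \<union> C"
    using AE2
  proof eventually_elim
    case (elim p)
    then show ?case using key[of "fst p"] unfolding A_def B_def C_def sign_fun_def by (cases "ereal \<bar>f (fst p)\<bar> \<le> N") auto
  qed
  then have "measure rho A \<le> measure rho (B \<union> C)"
    using Bsets Csets by (intro finite_measure_mono_AE) auto
  also have "\<dots> \<le> measure rho B + measure rho C" by (rule measure_Un_le[OF Bsets Csets])
  finally have 1: "measure rho A \<le> measure rho B + measure rho C" .
  have "AE p in rho. p \<in> B \<longrightarrow> p \<in> A \<union> C"
    using AE2
  proof eventually_elim
    case (elim p)
    then show ?case using key[of "fst p"] unfolding A_def B_def C_def sign_fun_def by (cases "ereal \<bar>f (fst p)\<bar> \<le> N") auto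
  qed
  then have "measure rho B \<le> measure rho (A \<union> C)"
    using Asets Csets by (intro finite_measure_mono_AE) auto
  also have "\<dots> \<le> measure rho A + measure rho C" by (rule measure_Un_le[OF Asets Csets])
  finally have 2: "measure rho B \<le> measure rho A + measure rho C" .
  show ?thesis using 1 2 mS
    unfolding risk_def A_def[symmetric] B_def[symmetric] S_def N_def M_def by linarith
qed

end
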